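(* Suppose that $n=m$ and $W=(w_{ij})\in(\mathbb{R}_{>0})^{n\times n}$ is symmetric. Then $T=T(W)=(t_{ij})$ is also symmetric, and the Jacobian of the map $$(\log w_{ij},\ 1\le i\le j\le n)\mapsto (\log t_{ij},\ 1\le i\le j\le n)$$ is $\pm 1$.
   Context: The geometric RSK map $T:(\mathbb{R}_{>0})^{n\times m}\to(\mathbb{R}_{>0})^{n\times m}$ is defined by local moves: for $2\le i\le n$, $2\le j\le m$, $l_{ij}$ replaces the submatrix $\begin{pmatrix} x_{i-1,j-1}& x_{i-1,j}\\ x_{i,j-1}& x_{ij}\end{pmatrix}=\begin{pmatrix} a& b\\ c& d\end{pmatrix}$ by $\begin{pmatrix} bc/(ab+ac) & b\\ c& d(b+c) \end{pmatrix}$; $l_{i1}$ replaces $x_{i1}$ by $x_{i-1,1}x_{i1}$; $l_{1j}$ replaces $x_{1j}$ by $x_{1,j-1}x_{1j}$; $l_{11}$ is the identity. With $\pi^j_i=l_{ij}\circ\cdots\circ l_{i1}$, $R_i=\pi_1^{m-i+1}\circ\cdots\circ\pi^m_i$ ($i\le m$), $R_i=\pi^1_{i-m+1}\circ\cdots\circ\pi^m_i$ ($i\ge m$), $T=R_n\circ\cdots\circ R_1$. Here $m=n$. *)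

theory Defs
  imports "HOL-Analysis.Analysis"
begin

text \<open>Matrices are functions nat => nat => real, indexed 1-based: entry (i,j) is x i j,
  meaningful for 1 <= i <= n, 1 <= j <= m.\<close>

definition mupd :: "(nat \<Rightarrow> nat \<Rightarrow> real) \<Rightarrow> nat \<Rightarrow> nat \<Rightarrow> real \<Rightarrow> (nat \<Rightarrow> nat \<Rightarrow> real)" where
  "mupd x i j v = x(i := (x i)(j := v))"

definition lmove :: "nat \<Rightarrow> nat \<Rightarrow> (nat \<Rightarrow> nat \<Rightarrow> real) \<Rightarrow> (nat \<Rightarrow> nat \<Rightarrow> real)" where
  "lmove i j x =
    (if 2 \<le> i \<and> 2 \<le> j then
       (let a = x (i-1) (j-1); b = x (i-1) j; c = x i (j-1); d = x i j
        in mupd (mupd x (i-1) (j-1) (b * c / (a * b + a * c))) i j (d * (b + c)))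
     else if 2 \<le> i \<and> j = 1 then mupd x i 1 (x (i-1) 1 * x i 1)
     else if i = 1 \<and> 2 \<le> j then mupd x 1 j (x 1 (j-1) * x 1 j)
     else x)"

fun piop :: "nat \<Rightarrow> nat \<Rightarrow> (nat \<Rightarrow> nat \<Rightarrow> real) \<Rightarrow> (nat \<Rightarrow> nat \<Rightarrow> real)" where
  "piop i 0 = id"
| "piop i (Suc j) = lmove i (Suc j) \<circ> piop i j"

text \<open>R_i for an n x m matrix: the composition of pi_r^{r+m-i} over
  max(1, i-m+1) <= r <= i, where pi_i^m is applied first and the one with smallest r last.\<close>
definition Rop :: "nat \<Rightarrow> nat \<Rightarrow> (nat \<Rightarrow> nat \<Rightarrow> real) \<Rightarrow> (nat \<Rightarrow> nat \<Rightarrow> real)" where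
  "Rop m i x = fold (\<lambda>r. piop r (r + m - i)) (rev [max 1 (i + 1 - m)..<i + 1]) x"

definition grsk :: "nat \<Rightarrow> nat \<Rightarrow> (nat \<Rightarrow> nat \<Rightarrow> real) \<Rightarrow> (nat \<Rightarrow> nat \<Rightarrow> real)" where
  "grsk n m x = fold (Rop m) [1..<n + 1] x"

definition utri :: "nat \<Rightarrow> (nat \<times> nat) set" where
  "utri n = {(i, j). 1 \<le> i \<and> i \<le> j \<and> j \<le> n}"

definition symexp :: "(nat \<times> nat \<Rightarrow> real) \<Rightarrow> (nat \<Rightarrow> nat \<Rightarrow> real)" where
  "symexp u i j = exp (u (min i j, max i j))"

definition logT :: "nat \<Rightarrow> (nat \<times> nat \<Rightarrow> real) \<Rightarrow> (nat \<times> nat \<Rightarrow> real)" where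
  "logT n u = (\<lambda>(i, j). ln (grsk n n (symexp u) i j))"

definition det_on :: "'a set \<Rightarrow> ('a \<Rightarrow> 'a \<Rightarrow> real) \<Rightarrow> real" where
  "det_on I J = (\<Sum>p | p permutes I. of_int (sign p) * (\<Prod>a\<in>I. J a (p a)))"

end

theory Submission
  imports Defs "Jordan_Normal_Form.Determinant"
begin


definition depc :: "nat \<Rightarrow> nat \<Rightarrow> nat \<Rightarrow> nat \<Rightarrow> bool" where
  "depc r c r' c' = ((r = r' \<and> (c = c' \<or> c = Suc c' \<or> c' = Suc c)) \<or> (c = c' \<and> (r = Suc r' \<or> r' = Suc r))
     \<or> (r' = Suc r \<and> c' = Suc c) \<or> (r = Suc r' \<and> c = Suc c'))"

definition Rd :: "nat \<Rightarrow> nat \<Rightarrow> (nat \<times> nat) set" where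
  "Rd r c = {(r-1,c-1),(r-1,c),(r,c-1),(r,c)}"
definition Wr :: "nat \<Rightarrow> nat \<Rightarrow> (nat \<times> nat) set" where
  "Wr r c = {(r-1,c-1),(r,c)}"

lemma lmove_eq: "lmove r c x i j = (if 2 \<le> r \<and> 2 \<le> c then
   (if i = r-1 \<and> j = c-1 then x (r-1) c * x r (c-1) / (x (r-1) (c-1) * x (r-1) c + x (r-1) (c-1) * x r (c-1))
    else if i = r \<and> j = c then x r c * (x (r-1) c + x r (c-1)) else x i j)
  else if 2 \<le> r \<and> c = 1 then (if i = r \<and> j = 1 then x (r-1) 1 * x r 1 else x i j)
  else if r = 1 \<and> 2 \<le> c then (if i = 1 \<and> j = c then x 1 (c-1) * x 1 c else x i j)
  else x i j)"
proof (cases "2 \<le> r \<and> 2 \<le> c")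
  case True
  then show ?thesis by (auto simp: lmove_def mupd_def Let_def)
next
  case False
  then show ?thesis by (auto simp: lmove_def mupd_def Let_def)
qed

lemma lmove_frame:
  assumes "(i,j) \<notin> Wr r c"
  shows "lmove r c x i j = x i j"
  using assms unfolding lmove_eq Wr_def by auto

lemma lmove_local:
  assumes "\<And>i j. (i,j) \<in> Rd r c \<Longrightarrow> x i j = y i j" "(i,j) \<in> Wr r c"
  shows "lmove r c x i j = lmove r c y i j"
proof -
  have a: "x (r-1) (c-1) = y (r-1) (c-1)" "x (r-1) c = y (r-1) c" "x r (c-1) = y r (c-1)" "x r c = y r c"
    using assms(1) by (auto simp: Rd_def)
  from assms(2) have "(i = r-1 \<and> j = c-1) \<or> (i = r \<and> j = c)" by (simp add: Wr_def)
  then show ?thesis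
  proof
    assume h: "i = r-1 \<and> j = c-1"
    show ?thesis unfolding lmove_eq using h a by auto
  next
    assume h: "i = r \<and> j = c"
    show ?thesis unfolding lmove_eq using h a by auto
  qed
qed

lemma commute_gen:
  fixes f g :: "(nat \<Rightarrow> nat \<Rightarrow> real) \<Rightarrow> (nat \<Rightarrow> nat \<Rightarrow> real)"
  assumes ff: "\<And>x i j. (i,j) \<notin> Wf \<Longrightarrow> f x i j = x i j"
    and fl: "\<And>x y i j. (\<And>i j. (i,j) \<in> Rf \<Longrightarrow> x i j = y i j) \<Longrightarrow> (i,j) \<in> Wf \<Longrightarrow> f x i j = f y i j"
    and gf: "\<And>x i j. (i,j) \<notin> Wg \<Longrightarrow> g x i j = x i j"
    and gl: "\<And>x y i j. (\<And>i j. (i,j) \<in> Rg \<Longrightarrow> x i j = y i j) \<Longrightarrow> (i,j) \<in> Wg \<Longrightarrow> g x i j = g y i j"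
    and d1: "Wf \<inter> Rg = {}" and d2: "Wg \<inter> Rf = {}" and d3: "Wf \<inter> Wg = {}"
  shows "f (g x) = g (f x)"
proof (intro ext)
  fix i j
  show "f (g x) i j = g (f x) i j"
  proof (cases "(i,j) \<in> Wf")
    case True
    have "f (g x) i j = f x i j"
      by (rule fl[OF _ True]) (use gf d2 in blast)
    moreover have "g (f x) i j = f x i j" using True d3 gf by blast
    ultimately show ?thesis by simp
  next
    case nf: False
    show ?thesis
    proof (cases "(i,j) \<in> Wg")
      case True
      have "g (f x) i j = g x i j"
        by (rule gl[OF _ True]) (use ff d1 in blast)
      moreover have "f (g x) i j = g x i j" using nf ff by blast
      ultimately show ?thesis by simp
    next
      case False
      then show ?thesis using nf ff gf by simp
    qed
  qed
qed

lemma lmove_commute: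
  assumes "\<not> depc r c r' c'" "1 \<le> r" "1 \<le> c" "1 \<le> r'" "1 \<le> c'"
  shows "lmove r c (lmove r' c' x) = lmove r' c' (lmove r c x)"
proof -
  obtain a b a' b' where e: "r = Suc a" "c = Suc b" "r' = Suc a'" "c' = Suc b'"
    using assms(2-5) by (metis Suc_le_D One_nat_def)
  have nd: "\<not> depc (Suc a) (Suc b) (Suc a') (Suc b')" using assms(1) e by simp
  show ?thesis
  proof (rule commute_gen[where Wf="Wr r c" and Rf="Rd r c" and Wg="Wr r' c'" and Rg="Rd r' c'"])
  show "Wr r c \<inter> Rd r' c' = {}" using nd unfolding e Wr_def Rd_def depc_def by auto
  show "Wr r' c' \<inter> Rd r c = {}" using nd unfolding e Wr_def Rd_def depc_def by auto
  show "Wr r c \<inter> Wr r' c' = {}" using nd unfolding e Wr_def Rd_def depc_def by auto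
  qed (auto intro: lmove_frame lmove_local)
qed


lemma depc_sym: "depc r c r' c' = depc r' c' r c"
  unfolding depc_def by auto

type_synonym mtx = "nat \<Rightarrow> nat \<Rightarrow> real"
type_synonym ev = "nat \<times> nat \<times> nat"

definition app :: "ev list \<Rightarrow> mtx \<Rightarrow> mtx" where
  "app ws x = fold (\<lambda>e. lmove (fst e) (fst (snd e))) ws x"

lemma app_Nil[simp]: "app [] x = x" and app_Cons[simp]: "app (e # ws) x = app ws (lmove (fst e) (fst (snd e)) x)"
  by (simp_all add: app_def)

lemma app_append[simp]: "app (xs @ ys) x = app ys (app xs x)"
  by (simp add: app_def)

definition dep :: "ev \<Rightarrow> ev \<Rightarrow> bool" where
  "dep e f = depc (fst e) (fst (snd e)) (fst f) (fst (snd f))"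

lemma app_insort:
  fixes key :: "ev \<Rightarrow> nat"
  assumes "\<forall>f\<in>set L. key f < key e \<longrightarrow> \<not> dep e f"
    and "\<forall>f\<in>set (e # L). 1 \<le> fst f \<and> 1 \<le> fst (snd f)"
  shows "app (insort_key key e L) x = app L (lmove (fst e) (fst (snd e)) x)"
  using assms
proof (induction L arbitrary: x)
  case Nil
  then show ?case by simp
next
  case (Cons f L)
  show ?case
  proof (cases "key e \<le> key f")
    case True
    then show ?thesis by simp
  next
    case False
    then have nd: "\<not> dep e f" using Cons.prems(1) by simp
    have "app (insort_key key e (f # L)) x = app (insort_key key e L) (lmove (fst f) (fst (snd f)) x)"
      using False by simp
    also have "\<dots> = app L (lmove (fst e) (fst (snd e)) (lmove (fst f) (fst (snd f)) x))"
      by (rule Cons.IH) (use Cons.prems in auto)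
    also have "lmove (fst e) (fst (snd e)) (lmove (fst f) (fst (snd f)) x)
        = lmove (fst f) (fst (snd f)) (lmove (fst e) (fst (snd e)) x)"
      by (rule lmove_commute) (use nd Cons.prems(2) in \<open>auto simp: dep_def\<close>)
    finally show ?thesis by simp
  qed
qed

lemma app_sort:
  fixes key :: "ev \<Rightarrow> nat"
  assumes "sorted_wrt (\<lambda>e f. dep e f \<longrightarrow> key e < key f) ws"
    and "\<forall>e\<in>set ws. 1 \<le> fst e \<and> 1 \<le> fst (snd e)"
  shows "app ws x = app (sort_key key ws) x"
  using assms
proof (induction ws arbitrary: x)
  case Nil
  then show ?case by simp
next
  case (Cons e ws)
  have "app (e # ws) x = app ws (lmove (fst e) (fst (snd e)) x)" by simp
  also have "\<dots> = app (sort_key key ws) (lmove (fst e) (fst (snd e)) x)"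
    using Cons by simp
  also have "\<dots> = app (insort_key key e (sort_key key ws)) x"
    by (rule app_insort[symmetric]) (use Cons.prems in auto)
  finally show ?case by simp
qed

definition Tw :: "nat \<Rightarrow> ev list" where
  "Tw n = concat (map (\<lambda>i. concat (map (\<lambda>r. map (\<lambda>c. (r, c, i - r)) [1..<r + n - i + 1])
      (rev [max 1 (i + 1 - n)..<i + 1]))) [1..<n + 1])"

lemma piop_fold: "piop r k x = fold (\<lambda>c. lmove r c) [1..<k + 1] x"
  by (induction k arbitrary: x) auto

lemma app_concat_map: "app (concat (map g xs)) x = fold (\<lambda>a. app (g a)) xs x"
  by (induction xs arbitrary: x) auto

lemma app_map_row: "app (map (\<lambda>c. (r, c, t)) cs) x = fold (\<lambda>c. lmove r c) cs x"
  by (induction cs arbitrary: x) auto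

lemma grsk_Tw: "grsk n n x = app (Tw n) x"
proof -
  have "Rop n i y = app (concat (map (\<lambda>r. map (\<lambda>c. (r, c, i - r)) [1..<r + n - i + 1])
      (rev [max 1 (i + 1 - n)..<i + 1]))) y" for i y
    unfolding Rop_def app_concat_map app_map_row piop_fold by simp
  then show ?thesis
    unfolding grsk_def Tw_def app_concat_map by (metis)
qed


definition before :: "ev \<Rightarrow> ev \<Rightarrow> bool" where
  "before e f = (fst e + snd (snd e) < fst f + snd (snd f) \<or>
     (fst e + snd (snd e) = fst f + snd (snd f) \<and> (fst f < fst e \<or> (fst e = fst f \<and> fst (snd e) < fst (snd f)))))"

lemma sorted_wrt_concat_map:
  assumes "\<forall>a\<in>set xs. sorted_wrt P (g a)"
    and "sorted_wrt (\<lambda>a b. \<forall>x\<in>set (g a). \<forall>y\<in>set (g b). P x y) xs"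
  shows "sorted_wrt P (concat (map g xs))"
  using assms by (induction xs) (auto simp: sorted_wrt_append)

lemma Tw_sorted: "sorted_wrt before (Tw n)"
  unfolding Tw_def
proof (rule sorted_wrt_concat_map)
  show "\<forall>i\<in>set [1..<n + 1]. sorted_wrt before (concat (map (\<lambda>r. map (\<lambda>c. (r, c, i - r)) [1..<r + n - i + 1])
      (rev [max 1 (i + 1 - n)..<i + 1])))"
  proof
    fix i assume i: "i \<in> set [1..<n + 1]"
    show "sorted_wrt before (concat (map (\<lambda>r. map (\<lambda>c. (r, c, i - r)) [1..<r + n - i + 1])
      (rev [max 1 (i + 1 - n)..<i + 1])))"
    proof (rule sorted_wrt_concat_map)
      show "\<forall>r\<in>set (rev [max 1 (i + 1 - n)..<i + 1]). sorted_wrt before (map (\<lambda>c. (r, c, i - r)) [1..<r + n - i + 1])"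
      proof
        fix r assume "r \<in> set (rev [max 1 (i + 1 - n)..<i + 1])"
        show "sorted_wrt before (map (\<lambda>c. (r, c, i - r)) [1..<r + n - i + 1])"
          unfolding sorted_wrt_map
          by (rule sorted_wrt_mono_rel[OF _ sorted_wrt_upt]) (simp add: before_def)
      qed
      show "sorted_wrt (\<lambda>a b. \<forall>x\<in>set (map (\<lambda>c. (a, c, i - a)) [1..<a + n - i + 1]).
          \<forall>y\<in>set (map (\<lambda>c. (b, c, i - b)) [1..<b + n - i + 1]). before x y) (rev [max 1 (i + 1 - n)..<i + 1])"
        unfolding sorted_wrt_rev
        by (rule sorted_wrt_mono_rel[OF _ sorted_wrt_upt]) (auto simp: before_def)
    qed
  qed
  show "sorted_wrt (\<lambda>a b. \<forall>x\<in>set (concat (map (\<lambda>r. map (\<lambda>c. (r, c, a - r)) [1..<r + n - a + 1])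
      (rev [max 1 (a + 1 - n)..<a + 1]))). \<forall>y\<in>set (concat (map (\<lambda>r. map (\<lambda>c. (r, c, b - r)) [1..<r + n - b + 1])
      (rev [max 1 (b + 1 - n)..<b + 1]))). before x y) [1..<n + 1]"
    by (rule sorted_wrt_mono_rel[OF _ sorted_wrt_upt]) (auto simp: before_def)
qed

definition Sev :: "nat \<Rightarrow> ev set" where
  "Sev n = {e. 1 \<le> fst e \<and> 1 \<le> fst (snd e) \<and> fst e + snd (snd e) \<le> n \<and> fst (snd e) + snd (snd e) \<le> n}"

lemma mem_Tw: "e \<in> set (Tw n) \<longleftrightarrow> (\<exists>i\<in>set [1..<n + 1]. \<exists>r\<in>set (rev [max 1 (i + 1 - n)..<i + 1]).
     e \<in> set (map (\<lambda>c. (r, c, i - r)) [1..<r + n - i + 1]))"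
  unfolding Tw_def set_concat set_map by (auto simp del: upt_Suc set_upt)

lemma set_Tw: "set (Tw n) = Sev n"
proof
  show "set (Tw n) \<subseteq> Sev n"
  proof
    fix e assume "e \<in> set (Tw n)"
    then obtain i r where ir: "i \<in> set [1..<n + 1]" "r \<in> set (rev [max 1 (i + 1 - n)..<i + 1])"
      "e \<in> set (map (\<lambda>c. (r, c, i - r)) [1..<r + n - i + 1])"
      unfolding mem_Tw by blast
    then obtain c where c: "c \<in> set [1..<r + n - i + 1]" "e = (r, c, i - r)" by auto
    have h: "1 \<le> i" "i < n + 1" "max 1 (i + 1 - n) \<le> r" "r < i + 1" "1 \<le> c" "c < r + n - i + 1"
      using ir(1,2) c(1) by (simp_all only: set_upt set_rev atLeastLessThan_iff)
    then show "e \<in> Sev n" using c(2) by (auto simp: Sev_def)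
  qed
next
  show "Sev n \<subseteq> set (Tw n)"
  proof
    fix e assume e: "e \<in> Sev n"
    obtain r c t where et: "e = (r, c, t)" by (cases e) auto
    have h: "1 \<le> r" "1 \<le> c" "r + t \<le> n" "c + t \<le> n" using e et by (auto simp: Sev_def)
    have "e \<in> set (map (\<lambda>c. (r, c, (r + t) - r)) [1..<r + n - (r + t) + 1])"
      using h et by auto
    moreover have "r \<in> set (rev [max 1 (r + t + 1 - n)..<r + t + 1])" using h by auto
    moreover have "r + t \<in> set [1..<n + 1]" using h by auto
    ultimately show "e \<in> set (Tw n)" unfolding mem_Tw by blast
  qed
qed


definition lev :: "ev \<Rightarrow> nat" where "lev e = 3 * snd (snd e) + fst e + fst (snd e)"

definition key :: "nat \<Rightarrow> ev \<Rightarrow> nat" where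
  "key B e = 2 * (B * (B * lev e + min (fst e) (fst (snd e))) + max (fst e) (fst (snd e)))
     + (if fst e \<le> fst (snd e) then 0 else 1)"

lemma dep_before_lev:
  assumes "dep e f" "before e f" shows "lev e < lev f"
proof -
  obtain r c t where e: "e = (r, c, t)" by (cases e) auto
  obtain r' c' t' where f: "f = (r', c', t')" by (cases f) auto
  have d: "depc r c r' c'" using assms(1) by (simp add: dep_def e f)
  have b: "r + t < r' + t' \<or> (r + t = r' + t' \<and> (r' < r \<or> (r = r' \<and> c < c')))"
    using assms(2) by (simp add: before_def e f)
  have "3 * t + r + c < 3 * t' + r' + c'"
    using d b unfolding depc_def by (elim disjE conjE; linarith)
  then show ?thesis by (simp add: lev_def e f)
qed

lemma ar1: "(x::nat) \<le> y \<Longrightarrow> 2 * x \<le> 2 * (y + z)" by simp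
lemma ar2: "(a::nat) < b \<Longrightarrow> k \<le> 2 * a + 1 \<Longrightarrow> k < 2 * b" by linarith
lemma ar3: "(a::nat) + B \<le> c \<Longrightarrow> M < B \<Longrightarrow> a + M < c" by linarith
lemma ar4: "(k::nat) < 2 * a \<Longrightarrow> a \<le> b \<Longrightarrow> 2 * b \<le> k' \<Longrightarrow> k < k'" by linarith

lemma key_le: "key B e \<le> 2 * (B * (B * lev e + min (fst e) (fst (snd e))) + max (fst e) (fst (snd e))) + 1"
  unfolding key_def by simp

lemma key_bound:
  assumes "fst e < B" "fst (snd e) < B"
  shows "key B e < 2 * (B * (B * (lev e + 1)))"
proof -
  let ?m = "min (fst e) (fst (snd e))" and ?M = "max (fst e) (fst (snd e))"
  have mB: "?m < B" and MB: "?M < B" using assms by auto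
  have "B * lev e + ?m + 1 \<le> B * (lev e + 1)" using mB by simp
  then have "B * (B * lev e + ?m + 1) \<le> B * (B * (lev e + 1))" by (rule mult_le_mono2)
  then have "B * (B * lev e + ?m) + B \<le> B * (B * (lev e + 1))" by (simp add: distrib_left)
  then have "B * (B * lev e + ?m) + ?M < B * (B * (lev e + 1))" using MB by (rule ar3)
  then show ?thesis using key_le[of B e] by (rule ar2)
qed

lemma key_lower: "2 * (B * (B * lev e)) \<le> key B e"
proof -
  have "B * lev e \<le> B * lev e + min (fst e) (fst (snd e))" by simp
  then have "B * (B * lev e) \<le> B * (B * lev e + min (fst e) (fst (snd e)))" by (rule mult_le_mono2)
  then have "2 * (B * (B * lev e)) \<le> 2 * (B * (B * lev e + min (fst e) (fst (snd e))) + max (fst e) (fst (snd e)))"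
    by (rule ar1)
  also have "\<dots> \<le> key B e" unfolding key_def by simp
  finally show ?thesis .
qed

lemma key_mono:
  assumes "lev e < lev f" "fst e < B" "fst (snd e) < B"
  shows "key B e < key B f"
proof -
  have "lev e + 1 \<le> lev f" using assms(1) by simp
  then have "B * (lev e + 1) \<le> B * lev f" by (rule mult_le_mono2)
  then have "B * (B * (lev e + 1)) \<le> B * (B * lev f)" by (rule mult_le_mono2)
  with key_bound[OF assms(2,3)] key_lower[of B f] show ?thesis by (metis ar4)
qed

lemma divmod_unique:
  fixes B Y Y' M M' :: nat
  assumes "B * Y + M = B * Y' + M'" "M < B" "M' < B"
  shows "Y = Y' \<and> M = M'"
proof -
  have "(B * Y + M) div B = Y" "(B * Y + M) mod B = M" using assms(2) by auto
  moreover have "(B * Y' + M') div B = Y'" "(B * Y' + M') mod B = M'" using assms(3) by auto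
  ultimately show ?thesis using assms(1) by metis
qed

lemma key_inj:
  assumes "key B e = key B f" "fst e < B" "fst (snd e) < B" "fst f < B" "fst (snd f) < B"
  shows "e = f"
proof -
  obtain r c t where e: "e = (r, c, t)" by (cases e) auto
  obtain r' c' t' where f: "f = (r', c', t')" by (cases f) auto
  let ?X = "B * (B * lev e + min r c) + max r c"
  let ?X' = "B * (B * lev f + min r' c') + max r' c'"
  have k: "2 * ?X + (if r \<le> c then 0 else 1) = 2 * ?X' + (if r' \<le> c' then 0 else 1)"
    using assms(1) by (simp add: key_def e f)
  have o: "(r \<le> c) = (r' \<le> c')" using k by presburger
  have X: "?X = ?X'" using k o by (auto split: if_splits)
  have b: "min r c < B" "max r c < B" "min r' c' < B" "max r' c' < B" using assms(2-5) e f by auto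
  from divmod_unique[OF X b(2) b(4)] have 1: "B * lev e + min r c = B * lev f + min r' c'" "max r c = max r' c'" by auto
  from divmod_unique[OF 1(1) b(1) b(3)] have 2: "lev e = lev f" "min r c = min r' c'" by auto
  have rc: "r = r' \<and> c = c'" using o 1(2) 2(2) by (auto simp: min_def max_def split: if_splits)
  then have "t = t'" using 2(1) by (simp add: lev_def e f)
  then show ?thesis using rc e f by simp
qed

lemma key_mir: "r < c \<Longrightarrow> key B (c, r, t) = Suc (key B (r, c, t))"
  by (simp add: key_def lev_def min_def max_def algebra_simps)

inductive wb :: "ev list \<Rightarrow> bool" where
  wb_Nil: "wb []"
| wb_diag: "wb es \<Longrightarrow> wb ((r, r, t) # es)"
| wb_pair: "wb es \<Longrightarrow> r < c \<Longrightarrow> wb ((r, c, t) # (c, r, t) # es)"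

definition mir :: "ev \<Rightarrow> ev" where "mir e = (fst (snd e), fst e, snd (snd e))"

lemma mir_mir[simp]: "mir (mir e) = e" by (simp add: mir_def)

lemma wb_sorted:
  assumes "sorted_wrt (\<lambda>e f. key B e < key B f) L"
    and "\<forall>e\<in>set L. mir e \<in> set L"
    and "\<forall>e\<in>set L. fst e < B \<and> fst (snd e) < B"
  shows "wb L"
  using assms
proof (induction "length L" arbitrary: L rule: less_induct)
  case less
  show ?case
  proof (cases L)
    case Nil
    then show ?thesis by (simp add: wb_Nil)
  next
    case (Cons e L')
    obtain r c t where e: "e = (r, c, t)" by (cases e) auto
    have sL': "sorted_wrt (\<lambda>e f. key B e < key B f) L'" and hd: "\<forall>f\<in>set L'. key B e < key B f"
      using less.prems(1) Cons by auto
    have eL': "e \<notin> set L'" using hd by auto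
    have bnd: "\<forall>f\<in>set L'. fst f < B \<and> fst (snd f) < B" using less.prems(3) Cons by auto
    have me: "(c, r, t) \<in> set L" using less.prems(2) Cons e by (auto simp: mir_def)
    consider "r = c" | "r < c" | "c < r" by linarith
    then show ?thesis
    proof cases
      case 1
      have "\<forall>f\<in>set L'. mir f \<in> set L'"
      proof
        fix f assume f: "f \<in> set L'"
        then have "mir f \<in> set L" using less.prems(2) Cons by auto
        moreover have "mir e = e" using 1 e by (simp add: mir_def)
        then have "mir f \<noteq> e" using f eL' by (metis mir_mir)
        ultimately show "mir f \<in> set L'" using Cons by auto
      qed
      then have "wb L'" using less.hyps[of L'] sL' bnd Cons by auto
      then show ?thesis using Cons e 1 by (simp add: wb_diag)
    next
      case 2
      have m': "(c, r, t) \<in> set L'" using me 2 Cons e by auto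
      then obtain g L'' where L': "L' = g # L''" by (cases L') auto
      have "key B e < key B g" using hd L' by auto
      moreover have "key B g \<le> key B (c, r, t)"
        using m' sL' L' by (auto)
      ultimately have "key B g = key B (c, r, t)" using key_mir[OF 2, of B t] e by simp
      then have g: "g = (c, r, t)"
        by (rule key_inj) (use bnd L' m' in auto)
      have dL: "distinct L" using less.prems(1) by (metis (no_types, lifting) sorted_wrt_mono_rel strict_sorted_iff sorted_wrt_map less_irrefl distinct_map)
      have "\<forall>f\<in>set L''. mir f \<in> set L''"
      proof
        fix f assume f: "f \<in> set L''"
        then have "mir f \<in> set L" using less.prems(2) Cons L' by auto
        moreover have "f \<noteq> e" "f \<noteq> g" using f dL Cons L' by auto
        then have "mir f \<noteq> e" "mir f \<noteq> g" using e g by (auto simp: mir_def)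
        ultimately show "mir f \<in> set L''" using Cons L' by auto
      qed
      then have "wb L''" using less.hyps[of L''] sL' bnd Cons L' by auto
      then show ?thesis using Cons e L' g 2 by (simp add: wb_pair)
    next
      case 3
      have m': "(c, r, t) \<in> set L'" using me 3 Cons e by auto
      then have "key B e < key B (c, r, t)" using hd by auto
      moreover have "key B e = Suc (key B (c, r, t))" using key_mir[OF 3] e by simp
      ultimately show ?thesis by simp
    qed
  qed
qed


definition psi :: "nat \<Rightarrow> nat \<Rightarrow> (nat \<times> nat \<Rightarrow> real) \<Rightarrow> (nat \<times> nat \<Rightarrow> real)" where
  "psi r c y = (if 2 \<le> r \<and> 2 \<le> c then
      y((r-1, c-1) := y (r-1, c) + y (min r (c-1), max r (c-1)) - y (r-1, c-1)
                         - ln (exp (y (r-1, c)) + exp (y (min r (c-1), max r (c-1)))),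
        (r, c) := y (r, c) + ln (exp (y (r-1, c)) + exp (y (min r (c-1), max r (c-1)))))
    else if r = 1 \<and> 2 \<le> c then y((1, c) := y (1, c-1) + y (1, c))
    else y)"

lemma exp_a: "exp ((b::real) + c - a - ln (exp b + exp c)) = exp b * exp c / (exp a * exp b + exp a * exp c)"
proof -
  have p: "exp b + exp c > 0" by (simp add: add_pos_pos)
  have "exp (b + c - a - ln (exp b + exp c)) = exp b * exp c / exp a / (exp b + exp c)"
    using p by (simp add: exp_diff exp_add)
  also have "\<dots> = exp b * exp c / (exp a * exp b + exp a * exp c)"
    by (simp add: field_simps)
  finally show ?thesis .
qed

lemma exp_d: "exp ((d::real) + ln (exp b + exp c)) = exp d * (exp b + exp c)"
  by (simp add: exp_add add_pos_pos del: exp_ln_iff)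

lemma batch_diag:
  assumes "1 \<le> r"
  shows "lmove r r (symexp y) = symexp (psi r r y)"
proof (intro ext)
  fix i j
  show "lmove r r (symexp y) i j = symexp (psi r r y) i j"
  proof (cases "r = 1")
    case True
    then show ?thesis by (simp add: lmove_eq psi_def)
  next
    case False
    then have r2: "2 \<le> r" using assms by simp
    have m: "min r (r - 1) = r - 1" "max r (r - 1) = r" by auto
    show ?thesis
      using r2 by (auto simp: lmove_eq psi_def symexp_def m exp_a exp_d min_def max_def)
  qed
qed




lemma psi_other: "p \<noteq> (r-1, c-1) \<Longrightarrow> p \<noteq> (r, c) \<Longrightarrow> psi r c y p = y p"
  by (auto simp: psi_def)

lemma psi_A: "2 \<le> r \<Longrightarrow> 2 \<le> c \<Longrightarrow> psi r c y (r-1, c-1) = y (r-1, c) + y (min r (c-1), max r (c-1)) - y (r-1, c-1)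
                         - ln (exp (y (r-1, c)) + exp (y (min r (c-1), max r (c-1))))"
  by (auto simp: psi_def)

lemma psi_D: "2 \<le> r \<Longrightarrow> 2 \<le> c \<Longrightarrow> psi r c y (r, c) = y (r, c) + ln (exp (y (r-1, c)) + exp (y (min r (c-1), max r (c-1))))"
  by (simp add: psi_def)

lemma psi_1: "2 \<le> c \<Longrightarrow> psi (Suc 0) c y (Suc 0, c) = y (Suc 0, c - Suc 0) + y (Suc 0, c)"
  by (simp add: psi_def)

lemma symexp_upper: "i \<le> j \<Longrightarrow> symexp y i j = exp (y (i, j))"
  by (simp add: symexp_def)

lemma pair_S1:
  assumes "1 \<le> r" "r < c" "(i, j) \<notin> Wr c r"
  shows "lmove r c (symexp y) i j = symexp (psi r c y) i j"
proof (cases "(i, j) \<in> Wr r c")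
  case False
  then have "lmove r c (symexp y) i j = symexp y i j" by (rule lmove_frame)
  moreover have "(min i j, max i j) \<noteq> (r-1, c-1)" "(min i j, max i j) \<noteq> (r, c)"
    using False assms(3) by (auto simp: Wr_def min_def max_def split: if_splits)
  ultimately show ?thesis by (simp add: symexp_def psi_other)
next
  case True
  show ?thesis
  proof (cases "r = 1")
    case r1: True
    have c2: "2 \<le> c" using assms r1 by simp
    have "lmove r c (symexp y) i j = symexp (psi r c y) i j" if ij: "i = 1" "j = c"
    proof -
      have "lmove r c (symexp y) i j = symexp y 1 (c-1) * symexp y 1 c"
        using ij r1 c2 by (simp add: lmove_eq)
      also have "\<dots> = exp (y (1, c-1) + y (1, c))" using c2 by (simp add: symexp_upper exp_add)
      also have "\<dots> = symexp (psi r c y) i j" using ij r1 c2 by (simp add: symexp_upper psi_1)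
      finally show ?thesis .
    qed
    moreover have "lmove r c (symexp y) i j = symexp (psi r c y) i j" if ij: "i = 0" "j = c - 1"
    proof -
      have "lmove r c (symexp y) i j = symexp y i j" using ij r1 c2 by (simp add: lmove_eq)
      moreover have "psi r c y (0, c - 1) = y (0, c - 1)" using r1 c2 by (simp add: psi_def)
      ultimately show ?thesis using ij by (simp add: symexp_upper)
    qed
    ultimately show ?thesis using True r1 by (auto simp: Wr_def)
  next
    case False
    then have r2: "2 \<le> r" using assms by simp
    have c2: "2 \<le> c" using assms by simp
    from True consider "i = r - 1" "j = c - 1" | "i = r" "j = c" by (auto simp: Wr_def)
    then show ?thesis
    proof cases
      case 1
      have "lmove r c (symexp y) i j = symexp y (r-1) c * symexp y r (c-1) /
          (symexp y (r-1) (c-1) * symexp y (r-1) c + symexp y (r-1) (c-1) * symexp y r (c-1))"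
        using 1 r2 c2 by (simp add: lmove_eq)
      also have "\<dots> = exp (y (r-1, c)) * exp (y (min r (c-1), max r (c-1))) /
          (exp (y (r-1, c-1)) * exp (y (r-1, c)) + exp (y (r-1, c-1)) * exp (y (min r (c-1), max r (c-1))))"
        using assms by (simp add: symexp_def)
      also have "\<dots> = symexp (psi r c y) i j"
        using 1 r2 c2 assms by (simp add: symexp_upper psi_A exp_a del: One_nat_def)
      finally show ?thesis .
    next
      case 2
      have "lmove r c (symexp y) i j = symexp y r c * (symexp y (r-1) c + symexp y r (c-1))"
        using 2 r2 c2 by (auto simp: lmove_eq)
      also have "\<dots> = exp (y (r, c)) * (exp (y (r-1, c)) + exp (y (min r (c-1), max r (c-1))))"
        using assms by (simp add: symexp_def)
      also have "\<dots> = symexp (psi r c y) i j"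
        using 2 r2 c2 assms by (simp add: symexp_upper psi_D exp_d)
      finally show ?thesis .
    qed
  qed
qed


lemma symexp_sym: "symexp y j i = symexp y i j"
  by (simp add: symexp_def min.commute max.commute)

lemma pair_S2:
  assumes "1 \<le> r" "r < c" "(i, j) \<in> Wr c r"
  shows "lmove c r (symexp y) i j = symexp (psi r c y) i j"
proof (cases "r = 1")
  case r1: True
  have c2: "2 \<le> c" using assms r1 by simp
  have "lmove c r (symexp y) i j = symexp (psi r c y) i j" if ij: "i = c" "j = 1"
  proof -
    have "lmove c r (symexp y) i j = symexp y (c-1) 1 * symexp y c 1"
      using ij r1 c2 by (simp add: lmove_eq)
    also have "\<dots> = exp (y (1, c-1) + y (1, c))" using c2 by (simp add: symexp_def exp_add)
    also have "\<dots> = symexp (psi r c y) 1 c" using r1 c2 by (simp add: symexp_upper psi_1)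
    finally show ?thesis using ij symexp_sym by metis
  qed
  moreover have "lmove c r (symexp y) i j = symexp (psi r c y) i j" if ij: "i = c - 1" "j = 0"
  proof -
    have "lmove c r (symexp y) i j = symexp y i j" using ij r1 c2 by (simp add: lmove_eq)
    moreover have "psi r c y (0, c - 1) = y (0, c - 1)" using r1 c2 by (simp add: psi_def)
    ultimately show ?thesis using ij by (simp add: symexp_def)
  qed
  ultimately show ?thesis using assms(3) r1 by (auto simp: Wr_def)
next
  case False
  then have r2: "2 \<le> r" using assms by simp
  have c2: "2 \<le> c" using assms by simp
  from assms(3) consider "i = c - 1" "j = r - 1" | "i = c" "j = r" by (auto simp: Wr_def)
  then show ?thesis
  proof cases
    case 1
    have "lmove c r (symexp y) i j = symexp y (c-1) r * symexp y c (r-1) /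
        (symexp y (c-1) (r-1) * symexp y (c-1) r + symexp y (c-1) (r-1) * symexp y c (r-1))"
      using 1 r2 c2 by (simp add: lmove_eq)
    also have "\<dots> = exp (y (min r (c-1), max r (c-1))) * exp (y (r-1, c)) /
        (exp (y (r-1, c-1)) * exp (y (min r (c-1), max r (c-1))) + exp (y (r-1, c-1)) * exp (y (r-1, c)))"
      using assms by (simp add: symexp_def min.commute max.commute)
    also have "\<dots> = exp (y (r-1, c)) * exp (y (min r (c-1), max r (c-1))) /
        (exp (y (r-1, c-1)) * exp (y (r-1, c)) + exp (y (r-1, c-1)) * exp (y (min r (c-1), max r (c-1))))"
      by (simp only: mult.commute add.commute)
    also have "\<dots> = symexp (psi r c y) (r-1) (c-1)"
      using r2 c2 assms by (simp add: symexp_upper psi_A exp_a del: One_nat_def)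
    finally show ?thesis using 1 symexp_sym by metis
  next
    case 2
    have "lmove c r (symexp y) i j = symexp y c r * (symexp y (c-1) r + symexp y c (r-1))"
      using 2 r2 c2 by (auto simp: lmove_eq)
    also have "\<dots> = exp (y (r, c)) * (exp (y (r-1, c)) + exp (y (min r (c-1), max r (c-1))))"
      using assms by (simp add: symexp_def min.commute max.commute add.commute)
    also have "\<dots> = symexp (psi r c y) r c"
      using r2 c2 assms by (simp add: symexp_upper psi_D exp_d)
    finally show ?thesis using 2 symexp_sym by metis
  qed
qed

lemma batch_pair:
  assumes "1 \<le> r" "r < c"
  shows "lmove c r (lmove r c (symexp y)) = symexp (psi r c y)"
proof (intro ext)
  fix i j
  show "lmove c r (lmove r c (symexp y)) i j = symexp (psi r c y) i j"
  proof (cases "(i, j) \<in> Wr c r")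
    case True
    have dis: "Wr r c \<inter> Rd c r = {}" using assms by (auto simp: Wr_def Rd_def)
    have "lmove c r (lmove r c (symexp y)) i j = lmove c r (symexp y) i j"
    proof (rule lmove_local[OF _ True])
      fix i' j' assume "(i', j') \<in> Rd c r"
      then have "(i', j') \<notin> Wr r c" using dis by auto
      then show "lmove r c (symexp y) i' j' = symexp y i' j'" by (rule lmove_frame)
    qed
    then show ?thesis using pair_S2[OF assms True] by simp
  next
    case False
    then have "lmove c r (lmove r c (symexp y)) i j = lmove r c (symexp y) i j" by (rule lmove_frame)
    then show ?thesis using pair_S1[OF assms False] by simp
  qed
qed

definition step :: "ev \<Rightarrow> (nat \<times> nat \<Rightarrow> real) \<Rightarrow> (nat \<times> nat \<Rightarrow> real)" where
  "step e y = (if fst e \<le> fst (snd e) then psi (fst e) (fst (snd e)) y else y)"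

definition Red :: "ev list \<Rightarrow> (nat \<times> nat \<Rightarrow> real) \<Rightarrow> (nat \<times> nat \<Rightarrow> real)" where
  "Red es y = fold step es y"

lemma Red_Nil[simp]: "Red [] y = y" and Red_Cons[simp]: "Red (e # es) y = Red es (step e y)"
  by (simp_all add: Red_def)

lemma app_wb:
  assumes "wb es" "\<forall>e\<in>set es. 1 \<le> fst e"
  shows "app es (symexp y) = symexp (Red es y)"
  using assms
proof (induction es arbitrary: y rule: wb.induct)
  case wb_Nil
  then show ?case by simp
next
  case (wb_diag es r t)
  have "app ((r, r, t) # es) (symexp y) = app es (symexp (psi r r y))"
    using batch_diag[of r y] wb_diag.prems by simp
  also have "\<dots> = symexp (Red es (psi r r y))" using wb_diag by simp
  finally show ?case by (simp add: step_def)
next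
  case (wb_pair es r c t)
  have "app ((r, c, t) # (c, r, t) # es) (symexp y) = app es (symexp (psi r c y))"
    using batch_pair[of r c y] wb_pair.prems wb_pair.hyps by simp
  also have "\<dots> = symexp (Red es (psi r c y))" using wb_pair by simp
  finally show ?case using wb_pair.hyps by (simp add: step_def)
qed


definition V :: "nat \<Rightarrow> ev list" where "V n = sort_key (key (n + 1)) (Tw n)"

lemma Sev_bounds: "e \<in> Sev n \<Longrightarrow> 1 \<le> fst e \<and> 1 \<le> fst (snd e) \<and> fst e \<le> n \<and> fst (snd e) \<le> n"
  by (auto simp: Sev_def)

lemma set_V: "set (V n) = Sev n" by (simp add: V_def set_Tw)

lemma grsk_V: "grsk n n x = app (V n) x"
proof -
  have "sorted_wrt (\<lambda>e f. dep e f \<longrightarrow> key (n + 1) e < key (n + 1) f) (Tw n)"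
  proof (rule sorted_wrt_mono_rel[OF _ Tw_sorted])
    fix e f assume ef: "e \<in> set (Tw n)" "f \<in> set (Tw n)" "before e f"
    show "dep e f \<longrightarrow> key (n + 1) e < key (n + 1) f"
    proof
      assume "dep e f"
      then have "lev e < lev f" using ef(3) by (rule dep_before_lev)
      then show "key (n + 1) e < key (n + 1) f"
        by (rule key_mono) (use ef(1) in \<open>auto simp: set_Tw Sev_def\<close>)
    qed
  qed
  moreover have "\<forall>e\<in>set (Tw n). 1 \<le> fst e \<and> 1 \<le> fst (snd e)" using Sev_bounds set_Tw by auto
  ultimately show ?thesis unfolding grsk_Tw V_def by (rule app_sort)
qed

lemma sorted_wrt_irrefl_distinct: "(\<And>x. \<not> R x x) \<Longrightarrow> sorted_wrt R xs \<Longrightarrow> distinct xs"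
  by (induction xs) auto

lemma wb_V: "wb (V n)"
proof (rule wb_sorted[where B = "n + 1"])
  have dT: "distinct (Tw n)"
    by (rule sorted_wrt_irrefl_distinct[OF _ Tw_sorted]) (auto simp: before_def)
  have inj: "inj_on (key (n + 1)) (set (V n))"
    by (rule inj_onI, rule key_inj) (auto simp: set_V Sev_def)
  have "sorted (map (key (n + 1)) (V n))" unfolding V_def by simp
  moreover have "distinct (map (key (n + 1)) (V n))"
    using inj dT by (simp add: distinct_map V_def)
  ultimately have "sorted_wrt (<) (map (key (n + 1)) (V n))" by (simp add: strict_sorted_iff)
  then show "sorted_wrt (\<lambda>e f. key (n + 1) e < key (n + 1) f) (V n)" by (simp add: sorted_wrt_map)
  show "\<forall>e\<in>set (V n). mir e \<in> set (V n)" unfolding set_V by (auto simp: Sev_def mir_def)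
  show "\<forall>e\<in>set (V n). fst e < n + 1 \<and> fst (snd e) < n + 1" using Sev_bounds set_V by fastforce
qed

lemma grsk_symexp: "grsk n n (symexp y) = symexp (Red (V n) y)"
  unfolding grsk_V by (rule app_wb[OF wb_V]) (use Sev_bounds set_V in auto)

lemma lmove_box:
  assumes agree: "\<forall>i\<in>{1..n}. \<forall>j\<in>{1..n}. x i j = x' i j" and rc: "1 \<le> r" "r \<le> n" "1 \<le> c" "c \<le> n"
    and ij: "i \<in> {1..n}" "j \<in> {1..n}"
  shows "lmove r c x i j = lmove r c x' i j"
proof -
  have e0: "x i j = x' i j" using agree ij by blast
  consider "2 \<le> r \<and> 2 \<le> c" | "2 \<le> r \<and> c = 1" | "r = 1 \<and> 2 \<le> c" | "\<not> (2 \<le> r \<and> 2 \<le> c) \<and> \<not> (2 \<le> r \<and> c = 1) \<and> \<not> (r = 1 \<and> 2 \<le> c)" by blast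
  then show ?thesis
  proof cases
    case 1
    have m: "r-1 \<in> {1..n}" "c-1 \<in> {1..n}" "r \<in> {1..n}" "c \<in> {1..n}" using rc 1 by auto
    have e: "x (r-1) (c-1) = x' (r-1) (c-1)" "x (r-1) c = x' (r-1) c" "x r (c-1) = x' r (c-1)" "x r c = x' r c"
      using agree m by blast+
    have h: "(2 \<le> r \<and> 2 \<le> c) = True" using 1 by simp
    show ?thesis unfolding lmove_eq by (simp only: h if_True e e0)
  next
    case 2
    have m: "r-1 \<in> {1..n}" "1 \<in> {1..n}" "r \<in> {1..n}" using rc 2 by auto
    have e: "x (r-1) 1 = x' (r-1) 1" "x r 1 = x' r 1"
      using agree m by blast+
    have h: "(2 \<le> r \<and> 2 \<le> c) = False" "(2 \<le> r \<and> c = 1) = True" using 2 by auto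
    show ?thesis unfolding lmove_eq by (simp only: h if_True if_False e e0)
  next
    case 3
    have m: "c-1 \<in> {1..n}" "1 \<in> {1..n}" "c \<in> {1..n}" using rc 3 by auto
    have e: "x 1 (c-1) = x' 1 (c-1)" "x 1 c = x' 1 c"
      using agree m by blast+
    have h: "(2 \<le> r \<and> 2 \<le> c) = False" "(2 \<le> r \<and> c = 1) = False" "(r = 1 \<and> 2 \<le> c) = True" using 3 by auto
    show ?thesis unfolding lmove_eq by (simp only: h if_True if_False e e0)
  next
    case 4
    show ?thesis unfolding lmove_eq using 4 by (simp only: e0 if_False)
  qed
qed

lemma app_box:
  assumes "\<forall>i\<in>{1..n}. \<forall>j\<in>{1..n}. x i j = x' i j" "\<forall>e\<in>set ws. e \<in> Sev n"
  shows "\<forall>i\<in>{1..n}. \<forall>j\<in>{1..n}. app ws x i j = app ws x' i j"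
  using assms
proof (induction ws arbitrary: x x')
  case Nil
  then show ?case by simp
next
  case (Cons e ws)
  have "\<forall>i\<in>{1..n}. \<forall>j\<in>{1..n}. lmove (fst e) (fst (snd e)) x i j = lmove (fst e) (fst (snd e)) x' i j"
    using lmove_box[OF Cons.prems(1)] Sev_bounds[of e n] Cons.prems(2) by auto
  then show ?case using Cons.IH[of "lmove (fst e) (fst (snd e)) x" "lmove (fst e) (fst (snd e)) x'"] Cons.prems(2)
    by simp
qed

lemma part1:
  fixes n :: nat and W :: "nat \<Rightarrow> nat \<Rightarrow> real"
  assumes pos: "\<forall>i\<in>{1..n}. \<forall>j\<in>{1..n}. W i j > 0"
    and sym: "\<forall>i\<in>{1..n}. \<forall>j\<in>{1..n}. W i j = W j i"
  shows "\<forall>i\<in>{1..n}. \<forall>j\<in>{1..n}. grsk n n W i j = grsk n n W j i"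
proof -
  let ?u = "\<lambda>(i, j). ln (W i j)"
  have ag: "\<forall>i\<in>{1..n}. \<forall>j\<in>{1..n}. W i j = symexp ?u i j"
  proof (intro ballI)
    fix i j assume ij: "i \<in> {1..n}" "j \<in> {1..n}"
    have "symexp ?u i j = W (min i j) (max i j)"
      using pos ij by (simp add: symexp_def min_def max_def)
    also have "\<dots> = W i j" using sym ij by (auto simp: min_def max_def)
    finally show "W i j = symexp ?u i j" by simp
  qed
  have "\<forall>i\<in>{1..n}. \<forall>j\<in>{1..n}. app (Tw n) W i j = app (Tw n) (symexp ?u) i j"
    by (rule app_box[OF ag]) (simp add: set_Tw)
  then have g: "\<forall>i\<in>{1..n}. \<forall>j\<in>{1..n}. grsk n n W i j = symexp (Red (V n) ?u) i j"
    by (simp add: grsk_Tw[symmetric] grsk_symexp)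
  show ?thesis using g by (simp add: symexp_sym)
qed


definition mm :: "'a set \<Rightarrow> ('a \<Rightarrow> 'a \<Rightarrow> real) \<Rightarrow> ('a \<Rightarrow> 'a \<Rightarrow> real) \<Rightarrow> ('a \<Rightarrow> 'a \<Rightarrow> real)" where
  "mm I A B = (\<lambda>i k. \<Sum>j\<in>I. A i j * B j k)"

lemma det_on_reindex:
  assumes bij: "bij_betw e J I" and fin: "finite J"
  shows "det_on I M = det_on J (\<lambda>a b. M (e a) (e b))"
proof -
  have inj: "inj_on e J" using bij by (rule bij_betw_imp_inj_on)
  have eJ: "e ` J = I" using bij by (simp add: bij_betw_def)
  let ?f = "\<lambda>\<pi>. map_permutation J e \<pi>"
  have mp: "map_permutation J e \<pi> = (\<lambda>x. if x \<in> I then e (\<pi> (inv_into J e x)) else x)" for \<pi>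
    by (auto simp: map_permutation_def restrict_id_def eJ fun_eq_iff)
  have bp: "bij_betw ?f {\<pi>. \<pi> permutes J} {\<pi>. \<pi> permutes I}"
    unfolding mp by (rule bij_betw_permutations[OF bij])
  have "det_on I M = (\<Sum>p\<in>{\<pi>. \<pi> permutes I}. of_int (sign p) * (\<Prod>a\<in>I. M a (p a)))"
    by (simp add: det_on_def)
  also have "\<dots> = (\<Sum>\<tau>\<in>{\<pi>. \<pi> permutes J}. of_int (sign (?f \<tau>)) * (\<Prod>a\<in>I. M a (?f \<tau> a)))"
    by (rule sum.reindex_bij_betw[OF bp, symmetric])
  also have "\<dots> = (\<Sum>\<tau>\<in>{\<pi>. \<pi> permutes J}. of_int (sign \<tau>) * (\<Prod>a\<in>J. M (e a) (e (\<tau> a))))"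
  proof (rule sum.cong[OF refl])
    fix \<tau> assume "\<tau> \<in> {\<pi>. \<pi> permutes J}"
    then have t: "\<tau> permutes J" by simp
    have s: "sign (?f \<tau>) = sign \<tau>" by (rule sign_map_permutation[OF inj t fin])
    have "(\<Prod>a\<in>I. M a (?f \<tau> a)) = (\<Prod>a\<in>J. M (e a) (?f \<tau> (e a)))"
      by (rule prod.reindex_bij_betw[OF bij, symmetric])
    also have "\<dots> = (\<Prod>a\<in>J. M (e a) (e (\<tau> a)))"
      by (rule prod.cong[OF refl]) (simp add: map_permutation_apply[OF inj])
    finally show "of_int (sign (?f \<tau>)) * (\<Prod>a\<in>I. M a (?f \<tau> a)) = of_int (sign \<tau>) * (\<Prod>a\<in>J. M (e a) (e (\<tau> a)))"
      using s by simp
  qed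
  also have "\<dots> = det_on J (\<lambda>a b. M (e a) (e b))" by (simp add: det_on_def)
  finally show ?thesis .
qed

lemma det_on_jnf: "det_on {0..<N} F = Determinant.det (Matrix.mat N N (\<lambda>(i, j). F i j))"
proof -
  have "Determinant.det (Matrix.mat N N (\<lambda>(i, j). F i j)) =
     (\<Sum>p\<in>{p. p permutes {0..<N}}. signof p * (\<Prod>i = 0..<N. Matrix.mat N N (\<lambda>(i, j). F i j) $$ (i, p i)))"
    by (rule det_def') simp
  also have "\<dots> = (\<Sum>p\<in>{p. p permutes {0..<N}}. signof p * (\<Prod>i = 0..<N. F i (p i)))"
  proof (rule sum.cong[OF refl])
    fix p assume "p \<in> {p. p permutes {0..<N}}"
    then have p: "p permutes {0..<N}" by simp
    have "(\<Prod>i = 0..<N. Matrix.mat N N (\<lambda>(i, j). F i j) $$ (i, p i)) = (\<Prod>i = 0..<N. F i (p i))"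
      by (rule prod.cong[OF refl]) (use permutes_in_image[OF p] in auto)
    then show "signof p * (\<Prod>i = 0..<N. Matrix.mat N N (\<lambda>(i, j). F i j) $$ (i, p i)) = signof p * (\<Prod>i = 0..<N. F i (p i))"
      by simp
  qed
  finally show ?thesis by (simp add: det_on_def)
qed

lemma det_on_mm:
  assumes fin: "finite I"
  shows "det_on I (mm I A B) = det_on I A * det_on I B"
proof -
  obtain e where bij: "bij_betw e {0..<card I} I" using ex_bij_betw_nat_finite[OF fin] by blast
  let ?N = "card I"
  let ?MA = "Matrix.mat ?N ?N (\<lambda>(i, j). A (e i) (e j))"
  let ?MB = "Matrix.mat ?N ?N (\<lambda>(i, j). B (e i) (e j))"
  have prodm: "Matrix.mat ?N ?N (\<lambda>(i, j). mm I A B (e i) (e j)) = ?MA * ?MB"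
  proof (rule eq_matI)
    fix i j assume ij: "i < dim_row (?MA * ?MB)" "j < dim_col (?MA * ?MB)"
    then have i: "i < ?N" and j: "j < ?N" by auto
    have "mm I A B (e i) (e j) = (\<Sum>k\<in>I. A (e i) k * B k (e j))" by (simp add: mm_def)
    also have "\<dots> = (\<Sum>k\<in>{0..<?N}. A (e i) (e k) * B (e k) (e j))"
      by (rule sum.reindex_bij_betw[OF bij, symmetric])
    also have "\<dots> = (?MA * ?MB) $$ (i, j)"
      using i j by (simp add: scalar_prod_def)
    finally show "Matrix.mat ?N ?N (\<lambda>(i, j). mm I A B (e i) (e j)) $$ (i, j) = (?MA * ?MB) $$ (i, j)"
      using i j by simp
  qed auto
  have "det_on I (mm I A B) = Determinant.det (?MA * ?MB)"
    using det_on_reindex[OF bij] det_on_jnf[of ?N] prodm by simp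
  also have "\<dots> = Determinant.det ?MA * Determinant.det ?MB"
    by (rule det_mult) auto
  also have "\<dots> = det_on I A * det_on I B"
    using det_on_reindex[OF bij] det_on_jnf[of ?N] by simp
  finally show ?thesis .
qed


definition mv :: "'a set \<Rightarrow> ('a \<Rightarrow> 'a \<Rightarrow> real) \<Rightarrow> ('a \<Rightarrow> real) \<Rightarrow> ('a \<Rightarrow> real)" where
  "mv I A v = (\<lambda>i. \<Sum>j\<in>I. A i j * v j)"

definition mid :: "'a \<Rightarrow> 'a \<Rightarrow> real" where "mid = (\<lambda>i j. if i = j then 1 else 0)"

lemma mv_mm: "finite I \<Longrightarrow> mv I (mm I A B) v = mv I A (mv I B v)"
  unfolding mv_def mm_def
  by (auto simp: fun_eq_iff sum_distrib_left sum_distrib_right mult.assoc intro: sum.swap)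

lemma sum_ind: "finite I \<Longrightarrow> X \<in> I \<Longrightarrow> (\<Sum>q\<in>I. (if q = X then (k::real) else 0) * v q) = k * v X"
proof -
  assume a: "finite I" "X \<in> I"
  have "(\<Sum>q\<in>I. (if q = X then k else 0) * v q) = (\<Sum>q\<in>I. if q = X then k * v X else 0)"
    by (rule sum.cong) auto
  also have "\<dots> = k * v X" using a by (simp add: sum.delta)
  finally show ?thesis .
qed

lemma mv_mid: "finite I \<Longrightarrow> i \<in> I \<Longrightarrow> mv I mid v i = v i"
proof -
  assume a: "finite I" "i \<in> I"
  have "mv I mid v i = (\<Sum>q\<in>I. (if q = i then 1 else 0) * v q)"
    unfolding mv_def mid_def by (rule sum.cong) auto
  then show ?thesis using sum_ind[OF a, of 1 v] by simp
qed


lemma det_on_diagK: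
  assumes fin: "finite I" and KI: "K \<subseteq> I"
    and rows: "\<And>p q. p \<in> I - K \<Longrightarrow> q \<in> I \<Longrightarrow> M p q = (if p = q then 1 else 0)"
    and offK: "\<And>p q. p \<in> K \<Longrightarrow> q \<in> K \<Longrightarrow> p \<noteq> q \<Longrightarrow> M p q = 0"
  shows "det_on I M = (\<Prod>k\<in>K. M k k)"
proof -
  let ?P = "{\<sigma>. \<sigma> permutes I}"
  let ?f = "\<lambda>\<sigma>. of_int (sign \<sigma>) * (\<Prod>a\<in>I. M a (\<sigma> a))"
  have z: "?f \<sigma> = 0" if s: "\<sigma> \<in> ?P - {id}" for \<sigma>
  proof -
    have sp: "\<sigma> permutes I" and ne: "\<sigma> \<noteq> id" using s by auto
    then obtain p where p: "\<sigma> p \<noteq> p" by (auto simp: fun_eq_iff)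
    then have pI: "p \<in> I" using sp by (meson permutes_not_in)
    have spI: "\<sigma> p \<in> I" using sp pI by (simp add: permutes_in_image)
    have "\<exists>a\<in>I. M a (\<sigma> a) = 0"
    proof (cases "p \<in> K")
      case False
      then show ?thesis using rows[of p "\<sigma> p"] pI spI p by auto
    next
      case True
      show ?thesis
      proof (cases "\<sigma> p \<in> K")
        case True
        then show ?thesis using offK[of p "\<sigma> p"] \<open>p \<in> K\<close> p pI by auto
      next
        case False
        let ?q = "\<sigma> p"
        have "\<sigma> ?q \<noteq> ?q"
        proof
          assume "\<sigma> ?q = ?q"
          then have "\<sigma> ?q = \<sigma> p" by simp
          then have "?q = p" using permutes_inj[OF sp] by (simp add: inj_eq)
          then show False using p by simp
        qed
        moreover have "\<sigma> ?q \<in> I" using sp spI by (simp add: permutes_in_image)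
        ultimately show ?thesis using rows[of ?q "\<sigma> ?q"] False spI by auto
      qed
    qed
    then have "(\<Prod>a\<in>I. M a (\<sigma> a)) = 0" using fin by (simp add: prod_zero)
    then show ?thesis by simp
  qed
  have idP: "id \<in> ?P" by (simp add: permutes_id)
  have finP: "finite ?P" using fin by (simp add: finite_permutations)
  have "det_on I M = sum ?f ?P" by (simp add: det_on_def)
  also have "\<dots> = ?f id + sum ?f (?P - {id})" by (rule sum.remove[OF finP idP])
  also have "sum ?f (?P - {id}) = 0" using z by simp
  also have "?f id = (\<Prod>a\<in>I. M a a)" by simp
  also have "\<dots> = (\<Prod>a\<in>K. M a a) * (\<Prod>a\<in>I - K. M a a)"
    using prod.subset_diff[OF KI fin] by (simp add: mult.commute)
  also have "(\<Prod>a\<in>I - K. M a a) = 1" using rows by (simp add: prod.neutral)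
  finally show ?thesis by simp
qed

lemma det_on_mid: "finite I \<Longrightarrow> det_on I mid = 1"
  using det_on_diagK[of I "{}" mid] by (simp add: mid_def)


definition cA :: "nat \<Rightarrow> nat \<Rightarrow> nat \<times> nat" where "cA r c = (r - 1, c - 1)"
definition cB :: "nat \<Rightarrow> nat \<Rightarrow> nat \<times> nat" where "cB r c = (r - 1, c)"
definition cC :: "nat \<Rightarrow> nat \<Rightarrow> nat \<times> nat" where "cC r c = (min r (c - 1), max r (c - 1))"
definition cD :: "nat \<Rightarrow> nat \<Rightarrow> nat \<times> nat" where "cD r c = (r, c)"

definition Mint :: "nat \<Rightarrow> nat \<Rightarrow> (nat \<times> nat \<Rightarrow> real) \<Rightarrow> (nat \<times> nat) \<Rightarrow> (nat \<times> nat) \<Rightarrow> real" where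
  "Mint r c y p q = (let eB = exp (y (cB r c)); eC = exp (y (cC r c)); sB = eB / (eB + eC); sC = eC / (eB + eC) in
     if p = cA r c then (if q = cA r c then -1 else 0) + (if q = cB r c then 1 - sB else 0) + (if q = cC r c then 1 - sC else 0)
     else if p = cD r c then (if q = cD r c then 1 else 0) + (if q = cB r c then sB else 0) + (if q = cC r c then sC else 0)
     else mid p q)"

definition Mb :: "nat \<Rightarrow> (nat \<times> nat) \<Rightarrow> (nat \<times> nat) \<Rightarrow> real" where
  "Mb c p q = (if p = (1, c) then (if q = (1, c) then 1 else 0) + (if q = (1, c - 1) then 1 else 0) else mid p q)"

definition Mst :: "ev \<Rightarrow> (nat \<times> nat \<Rightarrow> real) \<Rightarrow> (nat \<times> nat) \<Rightarrow> (nat \<times> nat) \<Rightarrow> real" where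
  "Mst e y = (if fst e \<le> fst (snd e) \<and> 2 \<le> fst e then Mint (fst e) (fst (snd e)) y
     else if fst e \<le> fst (snd e) \<and> fst e = 1 \<and> 2 \<le> fst (snd e) then Mb (fst (snd e)) else mid)"

definition cd :: "(nat \<times> nat) set \<Rightarrow> (real \<Rightarrow> nat \<times> nat \<Rightarrow> real) \<Rightarrow> (nat \<times> nat \<Rightarrow> real) \<Rightarrow> real \<Rightarrow> bool" where
  "cd I G v s0 = (\<forall>p\<in>I. ((\<lambda>s. G s p) has_real_derivative v p) (at s0))"

lemma finite_utri: "finite (utri n)"
  by (rule finite_subset[of _ "{1..n} \<times> {1..n}"]) (auto simp: utri_def)

lemma mv_Mint_A:
  assumes "finite I" "cA r c \<in> I" "cB r c \<in> I" "cC r c \<in> I" 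
  shows "mv I (Mint r c y) v (cA r c) = - v (cA r c) + (1 - exp (y (cB r c)) / (exp (y (cB r c)) + exp (y (cC r c)))) * v (cB r c)
     + (1 - exp (y (cC r c)) / (exp (y (cB r c)) + exp (y (cC r c)))) * v (cC r c)"
proof -
  let ?sB = "exp (y (cB r c)) / (exp (y (cB r c)) + exp (y (cC r c)))"
  let ?sC = "exp (y (cC r c)) / (exp (y (cB r c)) + exp (y (cC r c)))"
  have "mv I (Mint r c y) v (cA r c) = (\<Sum>q\<in>I. ((if q = cA r c then -1 else 0) + (if q = cB r c then 1 - ?sB else 0) + (if q = cC r c then 1 - ?sC else 0)) * v q)"
    by (simp add: mv_def Mint_def Let_def)
  also have "\<dots> = (\<Sum>q\<in>I. (if q = cA r c then -1 else 0) * v q) + (\<Sum>q\<in>I. (if q = cB r c then 1 - ?sB else 0) * v q) + (\<Sum>q\<in>I. (if q = cC r c then 1 - ?sC else 0) * v q)"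
    by (simp add: distrib_right sum.distrib)
  also have "\<dots> = - v (cA r c) + (1 - ?sB) * v (cB r c) + (1 - ?sC) * v (cC r c)"
    using assms by (simp add: sum_ind)
  finally show ?thesis .
qed

lemma cD_ne_cA: "1 \<le> r \<Longrightarrow> cD r c \<noteq> cA r c" by (auto simp: cD_def cA_def)

lemma mv_Mint_D:
  assumes "finite I" "cD r c \<in> I" "cB r c \<in> I" "cC r c \<in> I" "1 \<le> r"
  shows "mv I (Mint r c y) v (cD r c) = v (cD r c) + (exp (y (cB r c)) / (exp (y (cB r c)) + exp (y (cC r c)))) * v (cB r c)
     + (exp (y (cC r c)) / (exp (y (cB r c)) + exp (y (cC r c)))) * v (cC r c)"
proof -
  let ?sB = "exp (y (cB r c)) / (exp (y (cB r c)) + exp (y (cC r c)))"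
  let ?sC = "exp (y (cC r c)) / (exp (y (cB r c)) + exp (y (cC r c)))"
  have "mv I (Mint r c y) v (cD r c) = (\<Sum>q\<in>I. ((if q = cD r c then 1 else 0) + (if q = cB r c then ?sB else 0) + (if q = cC r c then ?sC else 0)) * v q)"
    using cD_ne_cA[of r c] assms(5) by (simp add: mv_def Mint_def Let_def)
  also have "\<dots> = (\<Sum>q\<in>I. (if q = cD r c then 1 else 0) * v q) + (\<Sum>q\<in>I. (if q = cB r c then ?sB else 0) * v q) + (\<Sum>q\<in>I. (if q = cC r c then ?sC else 0) * v q)"
    by (simp add: distrib_right sum.distrib)
  also have "\<dots> = v (cD r c) + ?sB * v (cB r c) + ?sC * v (cC r c)"
    using assms by (simp add: sum_ind)
  finally show ?thesis .
qed

lemma mv_Mint_other: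
  assumes "finite I" "p \<in> I" "p \<noteq> cA r c" "p \<noteq> cD r c"
  shows "mv I (Mint r c y) v p = v p"
proof -
  have "mv I (Mint r c y) v p = mv I mid v p"
    using assms by (simp add: mv_def Mint_def Let_def)
  then show ?thesis using mv_mid[OF assms(1,2)] by simp
qed


lemma deriv_lnsum:
  assumes dB: "((\<lambda>s. G s B) has_real_derivative vB) (at s0)" and dC: "((\<lambda>s. G s C) has_real_derivative vC) (at s0)"
  shows "((\<lambda>s. ln (exp (G s B) + exp (G s C))) has_real_derivative
     (exp (G s0 B) * vB + exp (G s0 C) * vC) / (exp (G s0 B) + exp (G s0 C))) (at s0)"
proof -
  have p: "0 < exp (G s0 B) + exp (G s0 C)" by (simp add: add_pos_pos)
  have e: "((\<lambda>s. exp (G s B) + exp (G s C)) has_real_derivative exp (G s0 B) * vB + exp (G s0 C) * vC) (at s0)"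
    by (intro DERIV_add DERIV_fun_exp dB dC)
  have "((\<lambda>s. ln (exp (G s B) + exp (G s C))) has_real_derivative
     1 / (exp (G s0 B) + exp (G s0 C)) * (exp (G s0 B) * vB + exp (G s0 C) * vC)) (at s0)"
    by (rule DERIV_chain2[OF DERIV_ln_divide[OF p] e])
  then show ?thesis by simp
qed


lemma alg_A: "(S::real) \<noteq> 0 \<Longrightarrow> - a + (1 - x / S) * b + (1 - y / S) * c = b + c - a - (x * b + y * c) / S"
  by (simp add: field_simps)

lemma alg_D: "(S::real) \<noteq> 0 \<Longrightarrow> d + (x / S) * b + (y / S) * c = d + (x * b + y * c) / S"
  by (simp add: field_simps)

lemma mv_Mb_c:
  assumes "finite I" "(1, c) \<in> I" "(1, c - 1) \<in> I"
  shows "mv I (Mb c) v (1, c) = v (1, c) + v (1, c - 1)"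
proof -
  have "mv I (Mb c) v (1, c) = (\<Sum>q\<in>I. (if q = (1, c) then 1 else 0) * v q) + (\<Sum>q\<in>I. (if q = (1, c - 1) then 1 else 0) * v q)"
    by (simp add: mv_def Mb_def distrib_right sum.distrib)
  also have "\<dots> = v (1, c) + v (1, c - 1)" using assms by (simp add: sum_ind)
  finally show ?thesis .
qed

lemma mv_Mb_other:
  assumes "finite I" "p \<in> I" "p \<noteq> (1, c)"
  shows "mv I (Mb c) v p = v p"
proof -
  have "mv I (Mb c) v p = mv I mid v p"
    using assms by (simp add: mv_def Mb_def)
  then show ?thesis using mv_mid[OF assms(1,2)] by simp
qed

lemma step_cd:
  assumes e: "e \<in> Sev n" and G: "cd (utri n) G v s0"
  shows "cd (utri n) (\<lambda>s. step e (G s)) (mv (utri n) (Mst e (G s0)) v) s0"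
proof -
  obtain r c t where et: "e = (r, c, t)" by (cases e) auto
  have b: "1 \<le> r" "1 \<le> c" "r \<le> n" "c \<le> n" using e et by (auto simp: Sev_def)
  have fin: "finite (utri n)" by (rule finite_utri)
  have dG: "((\<lambda>s. G s p) has_real_derivative v p) (at s0)" if "p \<in> utri n" for p
    using G that by (simp add: cd_def)
  consider (I) "r \<le> c \<and> 2 \<le> r" | (Bd) "r \<le> c \<and> r = 1 \<and> 2 \<le> c"
    | (Id) "\<not> (r \<le> c \<and> 2 \<le> r) \<and> \<not> (r \<le> c \<and> r = 1 \<and> 2 \<le> c)" by blast
  then show ?thesis
  proof cases
    case I
    have c2: "2 \<le> c" using I by simp
    have st: "step e y = psi r c y" for y using I et by (simp add: step_def)
    have M: "Mst e y = Mint r c y" for y using I et by (simp add: Mst_def)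
    have cin: "cA r c \<in> utri n" "cB r c \<in> utri n" "cC r c \<in> utri n" "cD r c \<in> utri n"
      using I b c2 by (auto simp: utri_def cA_def cB_def cC_def cD_def min_def max_def)
    show ?thesis unfolding cd_def
    proof
      fix p assume p: "p \<in> utri n"
      let ?B = "cB r c" and ?C = "cC r c" and ?A = "cA r c" and ?D = "cD r c"
      have pos: "0 < exp (G s0 ?B) + exp (G s0 ?C)" by (simp add: add_pos_pos)
      consider "p = ?A" | "p = ?D" | "p \<noteq> ?A \<and> p \<noteq> ?D" by blast
      then show "((\<lambda>s. step e (G s) p) has_real_derivative mv (utri n) (Mst e (G s0)) v p) (at s0)"
      proof cases
        case 1
        have f: "(\<lambda>s. step e (G s) p) = (\<lambda>s. G s ?B + G s ?C - G s ?A - ln (exp (G s ?B) + exp (G s ?C)))"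
          using 1 I c2 by (simp add: st psi_A cA_def cB_def cC_def del: One_nat_def)
        have d: "((\<lambda>s. G s ?B + G s ?C - G s ?A - ln (exp (G s ?B) + exp (G s ?C))) has_real_derivative
            v ?B + v ?C - v ?A - (exp (G s0 ?B) * v ?B + exp (G s0 ?C) * v ?C) / (exp (G s0 ?B) + exp (G s0 ?C))) (at s0)"
          by (intro DERIV_diff DERIV_add dG cin deriv_lnsum)
        have "mv (utri n) (Mst e (G s0)) v p = - v ?A + (1 - exp (G s0 ?B) / (exp (G s0 ?B) + exp (G s0 ?C))) * v ?B
            + (1 - exp (G s0 ?C) / (exp (G s0 ?B) + exp (G s0 ?C))) * v ?C"
          unfolding M 1 by (rule mv_Mint_A[OF fin cin(1-3)])
        also have "\<dots> = v ?B + v ?C - v ?A - (exp (G s0 ?B) * v ?B + exp (G s0 ?C) * v ?C) / (exp (G s0 ?B) + exp (G s0 ?C))"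
          using pos by (intro alg_A) simp
        finally have eq2: "mv (utri n) (Mst e (G s0)) v p = v ?B + v ?C - v ?A - (exp (G s0 ?B) * v ?B + exp (G s0 ?C) * v ?C) / (exp (G s0 ?B) + exp (G s0 ?C))" .
        show ?thesis unfolding f eq2 by (rule d)
      next
        case 2
        have f: "(\<lambda>s. step e (G s) p) = (\<lambda>s. G s ?D + ln (exp (G s ?B) + exp (G s ?C)))"
          using 2 I c2 by (simp add: st psi_D cD_def cB_def cC_def del: One_nat_def)
        have d: "((\<lambda>s. G s ?D + ln (exp (G s ?B) + exp (G s ?C))) has_real_derivative
            v ?D + (exp (G s0 ?B) * v ?B + exp (G s0 ?C) * v ?C) / (exp (G s0 ?B) + exp (G s0 ?C))) (at s0)"
          by (intro DERIV_add dG cin deriv_lnsum)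
        have "mv (utri n) (Mst e (G s0)) v p = v ?D + (exp (G s0 ?B) / (exp (G s0 ?B) + exp (G s0 ?C))) * v ?B
            + (exp (G s0 ?C) / (exp (G s0 ?B) + exp (G s0 ?C))) * v ?C"
          unfolding M 2 by (rule mv_Mint_D[OF fin cin(4) cin(2) cin(3) b(1)])
        also have "\<dots> = v ?D + (exp (G s0 ?B) * v ?B + exp (G s0 ?C) * v ?C) / (exp (G s0 ?B) + exp (G s0 ?C))"
          using pos by (intro alg_D) simp
        finally have eq2: "mv (utri n) (Mst e (G s0)) v p = v ?D + (exp (G s0 ?B) * v ?B + exp (G s0 ?C) * v ?C) / (exp (G s0 ?B) + exp (G s0 ?C))" .
        show ?thesis unfolding f eq2 by (rule d)
      next
        case 3
        have f: "(\<lambda>s. step e (G s) p) = (\<lambda>s. G s p)"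
          using 3 by (simp add: st psi_other cA_def cD_def)
        have "mv (utri n) (Mst e (G s0)) v p = v p"
          unfolding M by (rule mv_Mint_other[OF fin p]) (use 3 in auto)
        then show ?thesis using f dG[OF p] by simp
      qed
    qed
  next
    case Bd
    have r1: "r = 1" and c2: "2 \<le> c" using Bd by auto
    have st: "step e y = psi 1 c y" for y using Bd et by (simp add: step_def)
    have M: "Mst e y = Mb c" for y using Bd et by (simp add: Mst_def)
    have cin: "(1, c) \<in> utri n" "(1, c - 1) \<in> utri n" using b c2 by (auto simp: utri_def)
    show ?thesis unfolding cd_def
    proof
      fix p assume p: "p \<in> utri n"
      show "((\<lambda>s. step e (G s) p) has_real_derivative mv (utri n) (Mst e (G s0)) v p) (at s0)"
      proof (cases "p = (1, c)")
        case True
        have f: "(\<lambda>s. step e (G s) p) = (\<lambda>s. G s (1, c - 1) + G s (1, c))"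
          using True c2 by (simp add: st psi_1)
        have d: "((\<lambda>s. G s (1, c - 1) + G s (1, c)) has_real_derivative v (1, c - 1) + v (1, c)) (at s0)"
          by (intro DERIV_add dG cin)
        have "mv (utri n) (Mst e (G s0)) v p = v (1, c) + v (1, c - 1)"
          unfolding M True by (rule mv_Mb_c[OF fin cin])
        then show ?thesis using d f by (simp add: add.commute)
      next
        case False
        have p0: "p \<noteq> (0, c - 1)" using p by (auto simp: utri_def)
        have f: "(\<lambda>s. step e (G s) p) = (\<lambda>s. G s p)"
          using False p0 by (simp add: st psi_other)
        have "mv (utri n) (Mst e (G s0)) v p = v p"
          unfolding M by (rule mv_Mb_other[OF fin p False])
        then show ?thesis using f dG[OF p] by simp
      qed
    qed
  next
    case Id
    have st: "step e y = y" for y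
    proof (cases "r \<le> c")
      case True
      then have "r = 1" "c = 1" using Id b by auto
      then show ?thesis using et True by (simp add: step_def psi_def)
    next
      case False
      then show ?thesis using et by (simp add: step_def)
    qed
    have M: "Mst e y = mid" for y using Id et by (auto simp: Mst_def)
    show ?thesis unfolding cd_def
    proof
      fix p assume p: "p \<in> utri n"
      show "((\<lambda>s. step e (G s) p) has_real_derivative mv (utri n) (Mst e (G s0)) v p) (at s0)"
        using dG[OF p] mv_mid[OF fin p] by (simp add: st M)
    qed
  qed
qed


fun JP :: "(nat \<times> nat) set \<Rightarrow> ev list \<Rightarrow> (nat \<times> nat \<Rightarrow> real) \<Rightarrow> (nat \<times> nat) \<Rightarrow> (nat \<times> nat) \<Rightarrow> real" where
  "JP I [] y = mid"
| "JP I (e # es) y = mm I (JP I es (step e y)) (Mst e y)"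

lemma cd_Red:
  assumes "\<forall>e\<in>set es. e \<in> Sev n" "cd (utri n) G v s0"
  shows "cd (utri n) (\<lambda>s. Red es (G s)) (mv (utri n) (JP (utri n) es (G s0)) v) s0"
  using assms
proof (induction es arbitrary: G v)
  case Nil
  then show ?case using mv_mid[OF finite_utri] by (simp add: cd_def)
next
  case (Cons e es)
  have s: "cd (utri n) (\<lambda>s. step e (G s)) (mv (utri n) (Mst e (G s0)) v) s0"
    by (rule step_cd) (use Cons.prems in auto)
  have "cd (utri n) (\<lambda>s. Red es (step e (G s)))
      (mv (utri n) (JP (utri n) es (step e (G s0))) (mv (utri n) (Mst e (G s0)) v)) s0"
    using Cons.IH[OF _ s] Cons.prems(1) by simp
  then show ?case by (simp add: mv_mm[OF finite_utri])
qed

lemma det_Mst: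
  assumes e: "e \<in> Sev n"
  shows "det_on (utri n) (Mst e y) = 1 \<or> det_on (utri n) (Mst e y) = -1"
proof -
  obtain r c t where et: "e = (r, c, t)" by (cases e) auto
  have b: "1 \<le> r" "1 \<le> c" "r \<le> n" "c \<le> n" using e et by (auto simp: Sev_def)
  have fin: "finite (utri n)" by (rule finite_utri)
  consider (I) "r \<le> c \<and> 2 \<le> r" | (Bd) "r \<le> c \<and> r = 1 \<and> 2 \<le> c"
    | (Id) "\<not> (r \<le> c \<and> 2 \<le> r) \<and> \<not> (r \<le> c \<and> r = 1 \<and> 2 \<le> c)" by blast
  then show ?thesis
  proof cases
    case I
    have c2: "2 \<le> c" using I by simp
    have M: "Mst e y = Mint r c y" using I et by (simp add: Mst_def)
    have cin: "cA r c \<in> utri n" "cD r c \<in> utri n"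
      using I b c2 by (auto simp: utri_def cA_def cD_def)
    have ne: "cA r c \<noteq> cD r c" "cA r c \<noteq> cB r c" "cA r c \<noteq> cC r c" "cD r c \<noteq> cB r c" "cD r c \<noteq> cC r c"
      using I c2 by (auto simp: cA_def cB_def cC_def cD_def min_def max_def)
    have "det_on (utri n) (Mint r c y) = (\<Prod>k\<in>{cA r c, cD r c}. Mint r c y k k)"
    proof (rule det_on_diagK[OF fin])
      show "{cA r c, cD r c} \<subseteq> utri n" using cin by auto
      show "Mint r c y p q = (if p = q then 1 else 0)" if "p \<in> utri n - {cA r c, cD r c}" "q \<in> utri n" for p q
        using that by (simp add: Mint_def mid_def Let_def)
      show "Mint r c y p q = 0" if "p \<in> {cA r c, cD r c}" "q \<in> {cA r c, cD r c}" "p \<noteq> q" for p q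
        using that ne by (auto simp: Mint_def Let_def)
    qed
    also have "\<dots> = -1" using ne by (simp add: Mint_def Let_def)
    finally show ?thesis using M by simp
  next
    case Bd
    have c2: "2 \<le> c" using Bd by simp
    have M: "Mst e y = Mb c" using Bd et by (simp add: Mst_def)
    have cin: "(1, c) \<in> utri n" using b c2 by (auto simp: utri_def)
    have "det_on (utri n) (Mb c) = (\<Prod>k\<in>{(1, c)}. Mb c k k)"
    proof (rule det_on_diagK[OF fin])
      show "{(1, c)} \<subseteq> utri n" using cin by auto
      show "Mb c p q = (if p = q then 1 else 0)" if "p \<in> utri n - {(1, c)}" "q \<in> utri n" for p q
        using that by (simp add: Mb_def mid_def)
      show "Mb c p q = 0" if "p \<in> {(1, c)}" "q \<in> {(1, c)}" "p \<noteq> q" for p q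
        using that by auto
    qed
    also have "\<dots> = 1" using c2 by (simp add: Mb_def)
    finally show ?thesis using M by simp
  next
    case Id
    have M: "Mst e y = mid" using Id et by (auto simp: Mst_def)
    show ?thesis using det_on_mid[OF fin] M by simp
  qed
qed

lemma det_JP:
  assumes "\<forall>e\<in>set es. e \<in> Sev n"
  shows "det_on (utri n) (JP (utri n) es y) = 1 \<or> det_on (utri n) (JP (utri n) es y) = -1"
  using assms
proof (induction es arbitrary: y)
  case Nil
  then show ?case using det_on_mid[OF finite_utri] by simp
next
  case (Cons e es)
  have a: "det_on (utri n) (JP (utri n) es (step e y)) = 1 \<or> det_on (utri n) (JP (utri n) es (step e y)) = -1"
    using Cons by simp
  have b: "det_on (utri n) (Mst e y) = 1 \<or> det_on (utri n) (Mst e y) = -1"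
    using det_Mst Cons.prems by simp
  show ?case using a b by (auto simp: det_on_mm[OF finite_utri])
qed

lemma logT_Red:
  assumes "p \<in> utri n"
  shows "logT n y p = Red (V n) y p"
proof -
  obtain i j where p: "p = (i, j)" by (cases p) auto
  have "i \<le> j" using assms p by (simp add: utri_def)
  then show ?thesis using p by (simp add: logT_def grsk_symexp symexp_def)
qed

lemma part2:
  fixes n :: nat and W :: "nat \<Rightarrow> nat \<Rightarrow> real"
  shows "\<exists>J. (\<forall>p\<in>utri n. \<forall>q\<in>utri n.
              ((\<lambda>s. logT n ((\<lambda>(i, j). ln (W i j))(q := s)) p) has_real_derivative J p q)
                (at (ln (W (fst q) (snd q)))))
          \<and> (det_on (utri n) J = 1 \<or> det_on (utri n) J = -1)"
proof -
  let ?u = "\<lambda>(i, j). ln (W i j)"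
  let ?J = "JP (utri n) (V n) ?u"
  have ev: "\<forall>e\<in>set (V n). e \<in> Sev n" by (simp add: set_V)
  have "((\<lambda>s. logT n (?u(q := s)) p) has_real_derivative ?J p q) (at (ln (W (fst q) (snd q))))"
    if p: "p \<in> utri n" and q: "q \<in> utri n" for p q
  proof -
    let ?s0 = "ln (W (fst q) (snd q))"
    let ?G = "\<lambda>s. ?u(q := s)"
    let ?v = "\<lambda>p'. if p' = q then 1 else (0::real)"
    have G0: "?G ?s0 = ?u" by (auto simp: fun_eq_iff split: prod.splits)
    have cdG: "cd (utri n) ?G ?v ?s0"
      unfolding cd_def
    proof
      fix p' assume "p' \<in> utri n"
      show "((\<lambda>s. (?u(q := s)) p') has_real_derivative ?v p') (at ?s0)"
      proof (cases "p' = q")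
        case True
        then show ?thesis by (simp add: DERIV_ident)
      next
        case False
        then show ?thesis by (simp add: DERIV_const)
      qed
    qed
    have "cd (utri n) (\<lambda>s. Red (V n) (?G s)) (mv (utri n) (JP (utri n) (V n) (?G ?s0)) ?v) ?s0"
      by (rule cd_Red[OF ev cdG])
    then have d: "((\<lambda>s. Red (V n) (?G s) p) has_real_derivative mv (utri n) ?J ?v p) (at ?s0)"
      using p G0 by (simp add: cd_def)
    have "mv (utri n) ?J ?v p = (\<Sum>j\<in>utri n. (if j = q then ?J p q else 0))"
      unfolding mv_def by (rule sum.cong) auto
    also have "\<dots> = ?J p q" using q finite_utri by (simp add: sum.delta)
    finally have m: "mv (utri n) ?J ?v p = ?J p q" .
    have f: "(\<lambda>s. logT n (?u(q := s)) p) = (\<lambda>s. Red (V n) (?G s) p)"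
      using logT_Red[OF p] by simp
    show ?thesis unfolding f using d m by simp
  qed
  moreover have "det_on (utri n) ?J = 1 \<or> det_on (utri n) ?J = -1" by (rule det_JP[OF ev])
  ultimately show ?thesis by blast
qed

theorem theorem5p2:
  fixes n :: nat and W :: "nat \<Rightarrow> nat \<Rightarrow> real"
  assumes pos: "\<forall>i\<in>{1..n}. \<forall>j\<in>{1..n}. W i j > 0"
    and sym: "\<forall>i\<in>{1..n}. \<forall>j\<in>{1..n}. W i j = W j i"
  shows "(\<forall>i\<in>{1..n}. \<forall>j\<in>{1..n}. grsk n n W i j = grsk n n W j i)
    \<and> (\<exists>J. (\<forall>p\<in>utri n. \<forall>q\<in>utri n.
              ((\<lambda>s. logT n ((\<lambda>(i, j). ln (W i j))(q := s)) p) has_real_derivative J p q)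
                (at (ln (W (fst q) (snd q)))))
          \<and> (det_on (utri n) J = 1 \<or> det_on (utri n) J = -1))"
  proof (rule conjI)
  show "\<forall>i\<in>{1..n}. \<forall>j\<in>{1..n}. grsk n n W i j = grsk n n W j i"
    by (rule part1[OF pos sym])
  show "\<exists>J. (\<forall>p\<in>utri n. \<forall>q\<in>utri n.
              ((\<lambda>s. logT n ((\<lambda>(i, j). ln (W i j))(q := s)) p) has_real_derivative J p q)
                (at (ln (W (fst q) (snd q)))))
          \<and> (det_on (utri n) J = 1 \<or> det_on (utri n) J = -1)"
    by (rule part2)
qed

end
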